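(* For any $m,n\geqslant 0$ and $N\geqslant 1$ and any $T\in V^{m,n}$, $$\tfrac12\big(E^i{}_jE^j{}_i+NE^i{}_i\big)T=\begin{cases}\mathscr{C}_{m,n}(T), & m,n\geqslant 1,\\ \mathscr{L}_m(T), & n=0,\\ \mathscr{R}_n(T)+Nn\,T, & m=0,\end{cases}$$ (summation over repeated indices). In particular, for $m,n\geqslant1$, $\mathscr{C}_{m,n}$ lies in the centre of $C_{m,n}(N)$.
   Context: $V$ is an $N$-dimensional complex vector space with basis $\{e_i\}$ and dual basis $\{e^i\}$ of $V^*$; $V^{m,n}=V^{\otimes m}\otimes V^{*\otimes n}$ ($V^{0,0}=\mathbb{C}$), with the diagonal action of $GL(N)$ (contragredient on $V^*$); $C_{m,n}(N)=\mathrm{End}_{GL(N)}(V^{m,n})$. The matrix units $E^i{}_j\in\mathfrak{gl}_N$ act by $E^i{}_j(e_k)=-e_j\delta^i_k$, $E^i{}_j(e^k)=\delta^k_je^i$, and act on $V^{m,n}$ as derivations (Leibniz rule over the tensor factors). $\tau_{ab}$ ($1\leqslant a<b\leqslant m$) swaps the $a$-th and $b$-th factors $V$, $\tau_{a'b'}$ swaps the $a'$-th and $b'$-th factors $V^*$. $\mathscr{L}_m=\sum_{a<b}\tau_{ab}$ if $m\geqslant2$ and $0$ otherwise; $\mathscr{R}_n=\sum_{a'<b'}\tau_{a'b'}$ if $n\geqslant 2$ and $0$ otherwise. For $1\leqslant a\leqslant m$, $1\leqslant b'\leqslant n$, $\tau_{ab'}$ is the map which contracts the $a$-th $V$-factor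 with the $b'$-th $V^*$-factor and then inserts $\sum_ke_k\otimes e^k$ in these two positions; $\mathscr{A}_{m,n}=\sum_{a,b'}\tau_{ab'}$, and $\mathscr{C}_{m,n}=\mathscr{L}_m+\mathscr{R}_n-\mathscr{A}_{m,n}+Nn$ for $m,n\geqslant 1$. *)

theory Defs
  imports Complex_Main
begin

text \<open>Tensors T in V^{m,n}, V = C^N, are represented by their coefficient functions
  w.r.t. the basis e_{a_1} (x) ... (x) e_{a_m} (x) e^{b_1} (x) ... (x) e^{b_n}:
  T a b is the coefficient, for index lists a (length m) and b (length n) with
  entries in {0..<N} (0-based). Only values at valid index lists matter.\<close>

type_synonym tensor = "nat list \<Rightarrow> nat list \<Rightarrow> complex"

definition valid_idx :: "nat \<Rightarrow> nat list \<Rightarrow> bool" where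
  "valid_idx N xs \<longleftrightarrow> (\<forall>x\<in>set xs. x < N)"

definition idx :: "nat \<Rightarrow> nat \<Rightarrow> nat \<Rightarrow> (nat list \<times> nat list) set" where
  "idx m n N = {(a, b). length a = m \<and> length b = n \<and> valid_idx N a \<and> valid_idx N b}"

definition teq :: "nat \<Rightarrow> nat \<Rightarrow> nat \<Rightarrow> tensor \<Rightarrow> tensor \<Rightarrow> bool" where
  "teq m n N S T \<longleftrightarrow> (\<forall>(a, b)\<in>idx m n N. S a b = T a b)"

definition swap_list :: "nat \<Rightarrow> nat \<Rightarrow> nat list \<Rightarrow> nat list" where
  "swap_list p q xs = xs[p := xs ! q, q := xs ! p]"

text \<open>Matrix unit action: E^i_j e_k = - delta^i_k e_j, E^i_j e^k = delta^k_j e^i,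
  acting as a derivation; written on coefficients.\<close>
definition Eact :: "nat \<Rightarrow> nat \<Rightarrow> nat \<Rightarrow> nat \<Rightarrow> tensor \<Rightarrow> tensor" where
  "Eact m n i j T = (\<lambda>a b.
     (\<Sum>p<m. if a ! p = j then - T (a[p := i]) b else 0)
   + (\<Sum>q<n. if b ! q = i then T a (b[q := j]) else 0))"

definition casimir :: "nat \<Rightarrow> nat \<Rightarrow> nat \<Rightarrow> tensor \<Rightarrow> tensor" where
  "casimir m n N T = (\<lambda>a b. (1/2) *
     ((\<Sum>i<N. \<Sum>j<N. Eact m n i j (Eact m n j i T) a b)
      + of_nat N * (\<Sum>i<N. Eact m n i i T a b)))"

definition tauL :: "nat \<Rightarrow> nat \<Rightarrow> tensor \<Rightarrow> tensor" where
  "tauL p q T = (\<lambda>a b. T (swap_list p q a) b)"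

definition tauR :: "nat \<Rightarrow> nat \<Rightarrow> tensor \<Rightarrow> tensor" where
  "tauR p q T = (\<lambda>a b. T a (swap_list p q b))"

text \<open>tau_{pq'}: contract p-th V factor with q-th V* factor, then insert sum_k e_k (x) e^k.\<close>
definition tauA :: "nat \<Rightarrow> nat \<Rightarrow> nat \<Rightarrow> tensor \<Rightarrow> tensor" where
  "tauA N p q T = (\<lambda>a b. if a ! p = b ! q then (\<Sum>k<N. T (a[p := k]) (b[q := k])) else 0)"

definition Lop :: "nat \<Rightarrow> tensor \<Rightarrow> tensor" where
  "Lop m T = (\<lambda>a b. if m \<ge> 2 then (\<Sum>p<m. \<Sum>q\<in>{p<..<m}. tauL p q T a b) else 0)"

definition Rop :: "nat \<Rightarrow> tensor \<Rightarrow> tensor" where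
  "Rop n T = (\<lambda>a b. if n \<ge> 2 then (\<Sum>p<n. \<Sum>q\<in>{p<..<n}. tauR p q T a b) else 0)"

definition Aop :: "nat \<Rightarrow> nat \<Rightarrow> nat \<Rightarrow> tensor \<Rightarrow> tensor" where
  "Aop m n N T = (\<lambda>a b. \<Sum>p<m. \<Sum>q<n. tauA N p q T a b)"

definition Cop :: "nat \<Rightarrow> nat \<Rightarrow> nat \<Rightarrow> tensor \<Rightarrow> tensor" where
  "Cop m n N T = (\<lambda>a b. Lop m T a b + Rop n T a b - Aop m n N T a b + of_nat (N * n) * T a b)"

definition is_inverse :: "nat \<Rightarrow> (nat \<Rightarrow> nat \<Rightarrow> complex) \<Rightarrow> (nat \<Rightarrow> nat \<Rightarrow> complex) \<Rightarrow> bool" where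
  "is_inverse N g h \<longleftrightarrow> (\<forall>i<N. \<forall>j<N.
      (\<Sum>k<N. g i k * h k j) = (if i = j then 1 else 0) \<and>
      (\<Sum>k<N. h i k * g k j) = (if i = j then 1 else 0))"

text \<open>Diagonal action of g (inverse h) on V^{m,n}: g e_k = sum_i g_{ik} e_i,
  g e^k = sum_j h_{kj} e^j (contragredient).\<close>
definition gl_act :: "nat \<Rightarrow> nat \<Rightarrow> nat \<Rightarrow> (nat \<Rightarrow> nat \<Rightarrow> complex) \<Rightarrow> (nat \<Rightarrow> nat \<Rightarrow> complex)
    \<Rightarrow> tensor \<Rightarrow> tensor" where
  "gl_act m n N g h T = (\<lambda>a b. \<Sum>(c, d)\<in>idx m n N.
      (\<Prod>p<m. g (a ! p) (c ! p)) * (\<Prod>q<n. h (d ! q) (b ! q)) * T c d)"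

text \<open>Linear endomorphisms of V^{m,n} as matrices indexed by idx m n N.\<close>
definition lin_apply :: "nat \<Rightarrow> nat \<Rightarrow> nat
    \<Rightarrow> (nat list \<times> nat list \<Rightarrow> nat list \<times> nat list \<Rightarrow> complex) \<Rightarrow> tensor \<Rightarrow> tensor" where
  "lin_apply m n N M T = (\<lambda>a b. \<Sum>(c, d)\<in>idx m n N. M (a, b) (c, d) * T c d)"

text \<open>M belongs to C_{m,n}(N) = End_{GL(N)}(V^{m,n}).\<close>
definition in_C :: "nat \<Rightarrow> nat \<Rightarrow> nat
    \<Rightarrow> (nat list \<times> nat list \<Rightarrow> nat list \<times> nat list \<Rightarrow> complex) \<Rightarrow> bool" where
  "in_C m n N M \<longleftrightarrow> (\<forall>g h. is_inverse N g h \<longrightarrow>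
     (\<forall>T. teq m n N (lin_apply m n N M (gl_act m n N g h T)) (gl_act m n N g h (lin_apply m n N M T))))"

definition in_centre_C :: "nat \<Rightarrow> nat \<Rightarrow> nat \<Rightarrow> (tensor \<Rightarrow> tensor) \<Rightarrow> bool" where
  "in_centre_C m n N F \<longleftrightarrow>
     (\<forall>g h. is_inverse N g h \<longrightarrow>
        (\<forall>T. teq m n N (F (gl_act m n N g h T)) (gl_act m n N g h (F T)))) \<and>
     (\<forall>M. in_C m n N M \<longrightarrow>
        (\<forall>T. teq m n N (F (lin_apply m n N M T)) (lin_apply m n N M (F T))))"

end

theory Submission
  imports Defs
begin


definition EL :: "nat \<Rightarrow> nat \<Rightarrow> nat \<Rightarrow> tensor \<Rightarrow> tensor" where
  "EL m i j X = (\<lambda>a b. \<Sum>p<m. if a ! p = j then - X (a[p := i]) b else 0)"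
definition ER :: "nat \<Rightarrow> nat \<Rightarrow> nat \<Rightarrow> tensor \<Rightarrow> tensor" where
  "ER n i j X = (\<lambda>a b. \<Sum>q<n. if b ! q = i then X a (b[q := j]) else 0)"

lemma Eact_split: "Eact m n i j X a b = EL m i j X a b + ER n i j X a b"
  by (simp add: Eact_def EL_def ER_def)

lemma EL_add: "EL m i j (\<lambda>a b. X a b + Y a b) a b = EL m i j X a b + EL m i j Y a b"
  by (auto simp: EL_def sum.distrib[symmetric] intro!: sum.cong)
lemma ER_add: "ER n i j (\<lambda>a b. X a b + Y a b) a b = ER n i j X a b + ER n i j Y a b"
  by (auto simp: ER_def sum.distrib[symmetric] intro!: sum.cong)

lemma EE_split: "Eact m n i j (Eact m n j i X) a b =
   EL m i j (EL m j i X) a b + EL m i j (ER n j i X) a b + ER n i j (EL m j i X) a b + ER n i j (ER n j i X) a b"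
proof -
  have "Eact m n j i X = (\<lambda>a b. EL m j i X a b + ER n j i X a b)"
    by (simp add: Eact_split fun_eq_iff)
  then show ?thesis by (simp add: Eact_split EL_add ER_add)
qed

lemma valid_nth: "valid_idx N a \<Longrightarrow> p < length a \<Longrightarrow> a ! p < N"
  by (simp add: valid_idx_def)

lemma collapse: "(x::nat) < N \<Longrightarrow> (\<Sum>j<N. if x = j then F j else 0) = (F x :: complex)"
  by (simp add: sum.delta')

lemma pairs_sum:
  "(\<Sum>p<(m::nat). \<Sum>q<m. if q = p then 0 else f p q) = (\<Sum>p<m. \<Sum>q\<in>{p<..<m}. f p q + f q p :: complex)"
proof (induction m)
  case 0 then show ?case by simp
next
  case (Suc m)
  have A: "(\<Sum>p<Suc m. \<Sum>q<Suc m. if q = p then 0 else f p q)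
     = (\<Sum>p<m. (\<Sum>q<m. if q = p then 0 else f p q) + f p m) + (\<Sum>q<m. f m q)"
    by (simp add: sum.distrib)
  have C: "{m<..<Suc m} = {}" by auto
  have B: "(\<Sum>p<Suc m. \<Sum>q\<in>{p<..<Suc m}. f p q + f q p)
     = (\<Sum>p<m. (\<Sum>q\<in>{p<..<m}. f p q + f q p) + (f p m + f m p))"
  proof -
    have "\<And>p. p < m \<Longrightarrow> {p<..<Suc m} = insert m {p<..<m}" by auto
    then have "\<And>p. p < m \<Longrightarrow> (\<Sum>q\<in>{p<..<Suc m}. f p q + f q p) = (\<Sum>q\<in>{p<..<m}. f p q + f q p) + (f p m + f m p)"
      by (simp add: add.commute)
    then show ?thesis by (simp add: C)
  qed
  have D: "(\<Sum>p<m. (\<Sum>q<m. if q = p then 0 else f p q) + f p m) + (\<Sum>q<m. f m q)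
      = (\<Sum>p<m. \<Sum>q<m. if q = p then 0 else f p q) + (\<Sum>p<m. f p m + f m p)"
    by (simp add: sum.distrib add.assoc)
  show ?case unfolding A B D Suc.IH by (simp add: sum.distrib)
qed

lemma sum_LL:
  assumes "(a, b) \<in> idx m n N"
  shows "(\<Sum>i<N. \<Sum>j<N. EL m i j (EL m j i X) a b)
       = of_nat (N * m) * X a b + 2 * (\<Sum>p<m. \<Sum>q\<in>{p<..<m}. X (swap_list p q a) b)"
proof -
  from assms have la: "length a = m" and va: "valid_idx N a" by (auto simp: idx_def)
  have "(\<Sum>i<N. \<Sum>j<N. EL m i j (EL m j i X) a b)
     = (\<Sum>i<N. \<Sum>j<N. \<Sum>p<m. if a ! p = j then (\<Sum>r<m. if a[p:=i] ! r = i then X (a[p:=i, r:=j]) b else 0) else 0)"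
    by (simp add: EL_def sum_negf[symmetric] if_distrib cong: if_cong)
  also have "\<dots> = (\<Sum>i<N. \<Sum>p<m. \<Sum>j<N. if a ! p = j then (\<Sum>r<m. if a[p:=i] ! r = i then X (a[p:=i, r:=j]) b else 0) else 0)"
    by (rule sum.cong[OF refl], rule sum.swap)
  also have "\<dots> = (\<Sum>p<m. \<Sum>i<N. \<Sum>j<N. if a ! p = j then (\<Sum>r<m. if a[p:=i] ! r = i then X (a[p:=i, r:=j]) b else 0) else 0)"
    by (rule sum.swap)
  also have "\<dots> = (\<Sum>p<m. \<Sum>i<N. \<Sum>r<m. if a[p:=i] ! r = i then X (a[p:=i, r:=a!p]) b else 0)"
  proof (rule sum.cong[OF refl], rule sum.cong[OF refl])
    fix p i assume p: "p \<in> {..<m}"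
    have "a ! p < N" using p la va by (simp add: valid_nth)
    then show "(\<Sum>j<N. if a ! p = j then (\<Sum>r<m. if a[p:=i] ! r = i then X (a[p:=i, r:=j]) b else 0) else 0)
       = (\<Sum>r<m. if a[p:=i] ! r = i then X (a[p:=i, r:=a!p]) b else 0)"
      by (rule collapse)
  qed
  also have "\<dots> = (\<Sum>p<m. \<Sum>r<m. \<Sum>i<N. if a[p:=i] ! r = i then X (a[p:=i, r:=a!p]) b else 0)"
    by (rule sum.cong[OF refl], rule sum.swap)
  also have "\<dots> = (\<Sum>p<m. \<Sum>r<m. (if r = p then of_nat N * X a b else 0) + (if r = p then 0 else X (a[p:=a!r, r:=a!p]) b))"
  proof (intro sum.cong refl)
    fix p r assume p: "p \<in> {..<m}" and r: "r \<in> {..<m}"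
    show "(\<Sum>i<N. if a[p:=i] ! r = i then X (a[p:=i, r:=a!p]) b else 0)
      = (if r = p then of_nat N * X a b else 0) + (if r = p then 0 else X (a[p:=a!r, r:=a!p]) b)"
    proof (cases "r = p")
      case True then show ?thesis using p la by simp
    next
      case False
      then have "(\<Sum>i<N. if a[p:=i] ! r = i then X (a[p:=i, r:=a!p]) b else 0)
         = (\<Sum>i<N. if a ! r = i then X (a[p:=i, r:=a!p]) b else 0)" by simp
      also have "\<dots> = X (a[p:=a!r, r:=a!p]) b" using r la va by (simp add: collapse valid_nth)
      finally show ?thesis using False by simp
    qed
  qed
  also have "\<dots> = of_nat (N * m) * X a b + (\<Sum>p<m. \<Sum>r<m. if r = p then 0 else X (a[p:=a!r, r:=a!p]) b)"
    by (simp add: sum.distrib)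
  also have "(\<Sum>p<m. \<Sum>r<m. if r = p then 0 else X (a[p:=a!r, r:=a!p]) b)
      = (\<Sum>p<m. \<Sum>q\<in>{p<..<m}. X (a[p:=a!q, q:=a!p]) b + X (a[q:=a!p, p:=a!q]) b)"
    by (rule pairs_sum)
  also have "\<dots> = (\<Sum>p<m. \<Sum>q\<in>{p<..<m}. 2 * X (swap_list p q a) b)"
    by (intro sum.cong refl) (simp add: swap_list_def list_update_swap)
  finally show ?thesis by (simp add: sum_distrib_left)
qed

lemma sum_RR:
  assumes "(a, b) \<in> idx m n N"
  shows "(\<Sum>i<N. \<Sum>j<N. ER n i j (ER n j i X) a b)
       = of_nat (N * n) * X a b + 2 * (\<Sum>p<n. \<Sum>q\<in>{p<..<n}. X a (swap_list p q b))"
proof -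
  from assms have la: "length b = n" and va: "valid_idx N b" by (auto simp: idx_def)
  have "(\<Sum>i<N. \<Sum>j<N. ER n i j (ER n j i X) a b)
     = (\<Sum>i<N. \<Sum>j<N. \<Sum>p<n. if b ! p = i then (\<Sum>r<n. if b[p:=j] ! r = j then X a (b[p:=j, r:=i]) else 0) else 0)"
    by (simp add: ER_def)
  also have "\<dots> = (\<Sum>j<N. \<Sum>i<N. \<Sum>p<n. if b ! p = i then (\<Sum>r<n. if b[p:=j] ! r = j then X a (b[p:=j, r:=i]) else 0) else 0)"
    by (rule sum.swap)
  also have "\<dots> = (\<Sum>j<N. \<Sum>p<n. \<Sum>i<N. if b ! p = i then (\<Sum>r<n. if b[p:=j] ! r = j then X a (b[p:=j, r:=i]) else 0) else 0)"
    by (rule sum.cong[OF refl], rule sum.swap)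
  also have "\<dots> = (\<Sum>p<n. \<Sum>j<N. \<Sum>i<N. if b ! p = i then (\<Sum>r<n. if b[p:=j] ! r = j then X a (b[p:=j, r:=i]) else 0) else 0)"
    by (rule sum.swap)
  also have "\<dots> = (\<Sum>p<n. \<Sum>j<N. \<Sum>r<n. if b[p:=j] ! r = j then X a (b[p:=j, r:=b!p]) else 0)"
  proof (rule sum.cong[OF refl], rule sum.cong[OF refl])
    fix p j assume p: "p \<in> {..<n}"
    have "b ! p < N" using p la va by (simp add: valid_nth)
    then show "(\<Sum>i<N. if b ! p = i then (\<Sum>r<n. if b[p:=j] ! r = j then X a (b[p:=j, r:=i]) else 0) else 0)
       = (\<Sum>r<n. if b[p:=j] ! r = j then X a (b[p:=j, r:=b!p]) else 0)"
      by (rule collapse)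
  qed
  also have "\<dots> = (\<Sum>p<n. \<Sum>r<n. \<Sum>i<N. if b[p:=i] ! r = i then X a (b[p:=i, r:=b!p]) else 0)"
    by (rule sum.cong[OF refl], rule sum.swap)
  also have "\<dots> = (\<Sum>p<n. \<Sum>r<n. (if r = p then of_nat N * X a b else 0) + (if r = p then 0 else X a (b[p:=b!r, r:=b!p])))"
  proof (intro sum.cong refl)
    fix p r assume p: "p \<in> {..<n}" and r: "r \<in> {..<n}"
    show "(\<Sum>i<N. if b[p:=i] ! r = i then X a (b[p:=i, r:=b!p]) else 0)
      = (if r = p then of_nat N * X a b else 0) + (if r = p then 0 else X a (b[p:=b!r, r:=b!p]))"
    proof (cases "r = p")
      case True then show ?thesis using p la by simp
    next
      case False
      then have "(\<Sum>i<N. if b[p:=i] ! r = i then X a (b[p:=i, r:=b!p]) else 0)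
         = (\<Sum>i<N. if b ! r = i then X a (b[p:=i, r:=b!p]) else 0)" by simp
      also have "\<dots> = X a (b[p:=b!r, r:=b!p])" using r la va by (simp add: collapse valid_nth)
      finally show ?thesis using False by simp
    qed
  qed
  also have "\<dots> = of_nat (N * n) * X a b + (\<Sum>p<n. \<Sum>r<n. if r = p then 0 else X a (b[p:=b!r, r:=b!p]))"
    by (simp add: sum.distrib)
  also have "(\<Sum>p<n. \<Sum>r<n. if r = p then 0 else X a (b[p:=b!r, r:=b!p]))
      = (\<Sum>p<n. \<Sum>q\<in>{p<..<n}. X a (b[p:=b!q, q:=b!p]) + X a (b[q:=b!p, p:=b!q]))"
    by (rule pairs_sum)
  also have "\<dots> = (\<Sum>p<n. \<Sum>q\<in>{p<..<n}. 2 * X a (swap_list p q b))"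
    by (intro sum.cong refl) (simp add: swap_list_def list_update_swap)
  finally show ?thesis by (simp add: sum_distrib_left)
qed

lemma sum_if_const: "(\<Sum>k\<in>A. if c then f k else 0) = (if c then (\<Sum>k\<in>A. f k) else (0::complex))"
  by (cases c) simp_all

lemma sum_LR:
  assumes "(a, b) \<in> idx m n N"
  shows "(\<Sum>i<N. \<Sum>j<N. EL m i j (ER n j i X) a b) = - Aop m n N X a b"
proof -
  from assms have la: "length a = m" and va: "valid_idx N a" by (auto simp: idx_def)
  have "(\<Sum>i<N. \<Sum>j<N. EL m i j (ER n j i X) a b)
     = - (\<Sum>i<N. \<Sum>j<N. \<Sum>p<m. if a ! p = j then (\<Sum>q<n. if b ! q = j then X (a[p:=i]) (b[q:=i]) else 0) else 0)"
    by (simp add: EL_def ER_def sum_negf[symmetric] if_distrib cong: if_cong)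
  also have "(\<Sum>i<N. \<Sum>j<N. \<Sum>p<m. if a ! p = j then (\<Sum>q<n. if b ! q = j then X (a[p:=i]) (b[q:=i]) else 0) else 0)
      = (\<Sum>i<N. \<Sum>p<m. \<Sum>j<N. if a ! p = j then (\<Sum>q<n. if b ! q = j then X (a[p:=i]) (b[q:=i]) else 0) else 0)"
    by (rule sum.cong[OF refl], rule sum.swap)
  also have "\<dots> = (\<Sum>i<N. \<Sum>p<m. \<Sum>q<n. if b ! q = a ! p then X (a[p:=i]) (b[q:=i]) else 0)"
  proof (rule sum.cong[OF refl], rule sum.cong[OF refl])
    fix p i assume p: "p \<in> {..<m}"
    have "a ! p < N" using p la va by (simp add: valid_nth)
    then show "(\<Sum>j<N. if a ! p = j then (\<Sum>q<n. if b ! q = j then X (a[p:=i]) (b[q:=i]) else 0) else 0)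
       = (\<Sum>q<n. if b ! q = a ! p then X (a[p:=i]) (b[q:=i]) else 0)"
      by (rule collapse)
  qed
  also have "\<dots> = (\<Sum>p<m. \<Sum>i<N. \<Sum>q<n. if b ! q = a ! p then X (a[p:=i]) (b[q:=i]) else 0)"
    by (rule sum.swap)
  also have "\<dots> = (\<Sum>p<m. \<Sum>q<n. \<Sum>i<N. if b ! q = a ! p then X (a[p:=i]) (b[q:=i]) else 0)"
    by (rule sum.cong[OF refl], rule sum.swap)
  also have "\<dots> = Aop m n N X a b"
    by (simp add: Aop_def tauA_def eq_commute sum_if_const)
  finally show ?thesis .
qed

lemma sum_RL:
  assumes "(a, b) \<in> idx m n N"
  shows "(\<Sum>i<N. \<Sum>j<N. ER n i j (EL m j i X) a b) = - Aop m n N X a b"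
proof -
  from assms have la: "length b = n" and va: "valid_idx N b" by (auto simp: idx_def)
  have "(\<Sum>i<N. \<Sum>j<N. ER n i j (EL m j i X) a b)
     = - (\<Sum>i<N. \<Sum>j<N. \<Sum>q<n. if b ! q = i then (\<Sum>p<m. if a ! p = i then X (a[p:=j]) (b[q:=j]) else 0) else 0)"
    by (simp add: EL_def ER_def sum_negf[symmetric] if_distrib cong: if_cong)
  also have "(\<Sum>i<N. \<Sum>j<N. \<Sum>q<n. if b ! q = i then (\<Sum>p<m. if a ! p = i then X (a[p:=j]) (b[q:=j]) else 0) else 0)
      = (\<Sum>j<N. \<Sum>i<N. \<Sum>q<n. if b ! q = i then (\<Sum>p<m. if a ! p = i then X (a[p:=j]) (b[q:=j]) else 0) else 0)"
    by (rule sum.swap)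
  also have "\<dots> = (\<Sum>j<N. \<Sum>q<n. \<Sum>i<N. if b ! q = i then (\<Sum>p<m. if a ! p = i then X (a[p:=j]) (b[q:=j]) else 0) else 0)"
    by (rule sum.cong[OF refl], rule sum.swap)
  also have "\<dots> = (\<Sum>j<N. \<Sum>q<n. \<Sum>p<m. if a ! p = b ! q then X (a[p:=j]) (b[q:=j]) else 0)"
  proof (rule sum.cong[OF refl], rule sum.cong[OF refl])
    fix q j assume q: "q \<in> {..<n}"
    have "b ! q < N" using q la va by (simp add: valid_nth)
    then show "(\<Sum>i<N. if b ! q = i then (\<Sum>p<m. if a ! p = i then X (a[p:=j]) (b[q:=j]) else 0) else 0)
       = (\<Sum>p<m. if a ! p = b ! q then X (a[p:=j]) (b[q:=j]) else 0)"
      by (rule collapse)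
  qed
  also have "\<dots> = (\<Sum>j<N. \<Sum>p<m. \<Sum>q<n. if a ! p = b ! q then X (a[p:=j]) (b[q:=j]) else 0)"
    by (rule sum.cong[OF refl], rule sum.swap)
  also have "\<dots> = (\<Sum>p<m. \<Sum>j<N. \<Sum>q<n. if a ! p = b ! q then X (a[p:=j]) (b[q:=j]) else 0)"
    by (rule sum.swap)
  also have "\<dots> = (\<Sum>p<m. \<Sum>q<n. \<Sum>j<N. if a ! p = b ! q then X (a[p:=j]) (b[q:=j]) else 0)"
    by (rule sum.cong[OF refl], rule sum.swap)
  also have "\<dots> = Aop m n N X a b"
    by (simp add: Aop_def tauA_def sum_if_const)
  finally show ?thesis .
qed

lemma sum_diag:
  assumes "(a, b) \<in> idx m n N"
  shows "(\<Sum>i<N. Eact m n i i X a b) = (of_nat n - of_nat m) * X a b"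
proof -
  from assms have la: "length a = m" and va: "valid_idx N a" and lb: "length b = n" and vb: "valid_idx N b"
    by (auto simp: idx_def)
  have "(\<Sum>i<N. Eact m n i i X a b) = (\<Sum>i<N. \<Sum>p<m. if a ! p = i then - X (a[p:=i]) b else 0)
        + (\<Sum>i<N. \<Sum>q<n. if b ! q = i then X a (b[q:=i]) else 0)"
    by (simp add: Eact_def sum.distrib)
  also have "(\<Sum>i<N. \<Sum>p<m. if a ! p = i then - X (a[p:=i]) b else 0) = (\<Sum>p<m. \<Sum>i<N. if a ! p = i then - X (a[p:=i]) b else 0)"
    by (rule sum.swap)
  also have "\<dots> = (\<Sum>p<m. - X a b)"
  proof (rule sum.cong[OF refl])
    fix p assume p: "p \<in> {..<m}"
    have "a ! p < N" using p la va by (simp add: valid_nth)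
    then have "(\<Sum>i<N. if a ! p = i then - X (a[p:=i]) b else 0) = - X (a[p:=a!p]) b" by (rule collapse)
    then show "(\<Sum>i<N. if a ! p = i then - X (a[p:=i]) b else 0) = - X a b" by simp
  qed
  also have "(\<Sum>i<N. \<Sum>q<n. if b ! q = i then X a (b[q:=i]) else 0) = (\<Sum>q<n. \<Sum>i<N. if b ! q = i then X a (b[q:=i]) else 0)"
    by (rule sum.swap)
  also have "\<dots> = (\<Sum>q<n. X a b)"
  proof (rule sum.cong[OF refl])
    fix q assume q: "q \<in> {..<n}"
    have "b ! q < N" using q lb vb by (simp add: valid_nth)
    then have "(\<Sum>i<N. if b ! q = i then X a (b[q:=i]) else 0) = X a (b[q:=b!q])" by (rule collapse)
    then show "(\<Sum>i<N. if b ! q = i then X a (b[q:=i]) else 0) = X a b" by simp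
  qed
  finally show ?thesis by (simp add: algebra_simps)
qed

lemma Lop_eq: "Lop m X a b = (\<Sum>p<m. \<Sum>q\<in>{p<..<m}. X (swap_list p q a) b)"
proof (cases "m \<ge> 2")
  case True then show ?thesis by (simp add: Lop_def tauL_def)
next
  case False
  then have "m = 0 \<or> m = 1" by auto
  moreover have "{0<..<Suc 0} = ({}::nat set)" by auto
  ultimately show ?thesis by (auto simp: Lop_def)
qed

lemma Rop_eq: "Rop n X a b = (\<Sum>p<n. \<Sum>q\<in>{p<..<n}. X a (swap_list p q b))"
proof (cases "n \<ge> 2")
  case True then show ?thesis by (simp add: Rop_def tauR_def)
next
  case False
  then have "n = 0 \<or> n = 1" by auto
  moreover have "{0<..<Suc 0} = ({}::nat set)" by auto
  ultimately show ?thesis by (auto simp: Rop_def)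
qed

lemma casimir_Cop:
  assumes "(a, b) \<in> idx m n N"
  shows "casimir m n N X a b = Cop m n N X a b"
proof -
  have "(\<Sum>i<N. \<Sum>j<N. Eact m n i j (Eact m n j i X) a b)
     = (\<Sum>i<N. \<Sum>j<N. EL m i j (EL m j i X) a b) + (\<Sum>i<N. \<Sum>j<N. EL m i j (ER n j i X) a b)
       + (\<Sum>i<N. \<Sum>j<N. ER n i j (EL m j i X) a b) + (\<Sum>i<N. \<Sum>j<N. ER n i j (ER n j i X) a b)"
    by (simp add: EE_split sum.distrib)
  also have "\<dots> = of_nat (N * m) * X a b + 2 * Lop m X a b - Aop m n N X a b - Aop m n N X a b
        + (of_nat (N * n) * X a b + 2 * Rop n X a b)"
    using sum_LL[OF assms, of X] sum_RR[OF assms, of X] sum_LR[OF assms, of X] sum_RL[OF assms, of X]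
    by (simp add: Lop_eq Rop_eq)
  finally have S: "(\<Sum>i<N. \<Sum>j<N. Eact m n i j (Eact m n j i X) a b) = \<dots>" .
  show ?thesis
    unfolding casimir_def Cop_def S sum_diag[OF assms]
    by (simp add: field_simps)
qed



lemma finite_idx: "finite (idx m n N)"
proof -
  have "idx m n N \<subseteq> {xs. set xs \<subseteq> {..<N} \<and> length xs = m} \<times> {xs. set xs \<subseteq> {..<N} \<and> length xs = n}"
    by (auto simp: idx_def valid_idx_def)
  moreover have "finite ({xs. set xs \<subseteq> {..<N} \<and> length xs = m} \<times> {xs. set xs \<subseteq> {..<N} \<and> length xs = n})"
    by (intro finite_cartesian_product finite_lists_length_eq) auto
  ultimately show ?thesis by (rule finite_subset)
qed

lemma prod_ind: "finite A \<Longrightarrow> (\<Prod>x\<in>A. if P x then 1 else 0) = (if (\<forall>x\<in>A. P x) then 1 else (0::complex))"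
  by (induct rule: finite_induct) auto

definition dl :: "nat \<Rightarrow> nat \<Rightarrow> complex" where "dl x y = (if x = y then 1 else 0)"
definition Um :: "nat \<Rightarrow> nat \<Rightarrow> nat \<Rightarrow> nat \<Rightarrow> complex" where
  "Um i j x y = (if x = j \<and> y = i then 1 else 0)"
definition sf :: "nat \<Rightarrow> nat \<Rightarrow> complex \<Rightarrow> complex" where
  "sf i j t = (if i = j then 1 / (1 + t) - 1 else - t)"
definition gt :: "nat \<Rightarrow> nat \<Rightarrow> complex \<Rightarrow> nat \<Rightarrow> nat \<Rightarrow> complex" where
  "gt i j t x y = dl x y + t * Um i j x y"
definition ht :: "nat \<Rightarrow> nat \<Rightarrow> complex \<Rightarrow> nat \<Rightarrow> nat \<Rightarrow> complex" where
  "ht i j t x y = dl x y + sf i j t * Um i j x y"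

lemma sf_deriv: "(sf i j has_field_derivative -1) (at 0)"
proof (cases "i = j")
  case True
  have d1: "((\<lambda>t. 1 + t) has_field_derivative 0 + 1) (at (0::complex))"
    by (rule DERIV_add[OF DERIV_const DERIV_ident])
  have "((\<lambda>t. inverse (1 + t)) has_field_derivative - ((0 + 1) * inverse ((1 + 0) ^ Suc (Suc 0)))) (at (0::complex))"
    using DERIV_inverse_fun[OF d1] by simp
  then have "((\<lambda>t. inverse (1 + t) - 1) has_field_derivative - ((0 + 1) * inverse ((1 + 0) ^ Suc (Suc 0))) - 0) (at (0::complex))"
    by (rule DERIV_diff[OF _ DERIV_const])
  then have "((\<lambda>t. 1 / (1 + t) - 1) has_field_derivative -1) (at (0::complex))"
    by (simp add: divide_inverse)
  then show ?thesis using True unfolding sf_def by simp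
next
  case False
  have "((\<lambda>t. - t) has_field_derivative -1) (at (0::complex))"
    using DERIV_minus[OF DERIV_ident, of 0 UNIV] by simp
  then show ?thesis using False unfolding sf_def by simp
qed

lemma sf0: "sf i j 0 = 0" by (simp add: sf_def)

lemma gt_deriv: "((\<lambda>t. gt i j t x y) has_field_derivative Um i j x y) (at 0)"
proof -
  have "((\<lambda>t. dl x y + t * Um i j x y) has_field_derivative 0 + 1 * Um i j x y) (at 0)"
    by (rule DERIV_add[OF DERIV_const DERIV_cmult_right[OF DERIV_ident]])
  then show ?thesis unfolding gt_def by simp
qed

lemma ht_deriv: "((\<lambda>t. ht i j t x y) has_field_derivative - Um i j x y) (at 0)"
proof -
  have "((\<lambda>t. dl x y + sf i j t * Um i j x y) has_field_derivative 0 + (-1) * Um i j x y) (at 0)"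
    by (rule DERIV_add[OF DERIV_const DERIV_cmult_right[OF sf_deriv]])
  then show ?thesis unfolding ht_def by simp
qed

lemma dl_sumL: "(x::nat) < N \<Longrightarrow> (\<Sum>k<N. dl x k * f k) = f x"
proof -
  assume "x < N"
  have e: "\<And>k. dl x k * f k = (if x = k then f k else 0)" by (simp add: dl_def)
  have "(\<Sum>k<N. dl x k * f k) = (\<Sum>k<N. if x = k then f k else 0)" by (simp only: e)
  also have "\<dots> = f x" using \<open>x < N\<close> by (simp add: sum.delta)
  finally show ?thesis .
qed

lemma dl_sumR: "(y::nat) < N \<Longrightarrow> (\<Sum>k<N. f k * dl k y) = f y"
proof -
  assume "y < N"
  have e: "\<And>k. f k * dl k y = (if k = y then f k else 0)" by (simp add: dl_def)
  have "(\<Sum>k<N. f k * dl k y) = (\<Sum>k<N. if k = y then f k else 0)" by (simp only: e)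
  also have "\<dots> = f y" using \<open>y < N\<close> by (simp add: sum.delta')
  finally show ?thesis .
qed

lemma gt0: "gt i j 0 x y = dl x y" by (simp add: gt_def)
lemma ht0: "ht i j 0 x y = dl x y" by (simp add: ht_def sf0)

lemma inverse_gt:
  assumes "t \<noteq> -1" "i < N" "j < N"
  shows "is_inverse N (gt i j t) (ht i j t)"
proof -
  have key: "(\<Sum>k<N. (dl x k + u * Um i j x k) * (dl k y + s * Um i j k y))
      = dl x y + (u + s + (if i = j then u * s else 0)) * Um i j x y" if "x < N" "y < N" for x y u s
  proof -
    have "(\<Sum>k<N. (dl x k + u * Um i j x k) * (dl k y + s * Um i j k y))
        = (\<Sum>k<N. dl x k * dl k y) + s * (\<Sum>k<N. dl x k * Um i j k y) + u * (\<Sum>k<N. Um i j x k * dl k y)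
          + u * s * (\<Sum>k<N. Um i j x k * Um i j k y)"
      by (simp add: algebra_simps sum.distrib sum_distrib_left)
    also have "(\<Sum>k<N. dl x k * dl k y) = dl x y" by (rule dl_sumL[OF that(1)])
    also have "(\<Sum>k<N. dl x k * Um i j k y) = Um i j x y" by (rule dl_sumL[OF that(1)])
    also have "(\<Sum>k<N. Um i j x k * dl k y) = Um i j x y" by (rule dl_sumR[OF that(2)])
    also have "(\<Sum>k<N. Um i j x k * Um i j k y) = (if i = j then Um i j x y else 0)"
    proof -
      have e: "\<And>k. Um i j x k * Um i j k y = (if k = i then (if x = j \<and> i = j \<and> y = i then 1 else 0) else 0)"
        by (simp add: Um_def)
      have "(\<Sum>k<N. Um i j x k * Um i j k y) = (\<Sum>k<N. if k = i then (if x = j \<and> i = j \<and> y = i then 1 else 0) else 0)"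
        by (simp only: e)
      also have "\<dots> = (if x = j \<and> i = j \<and> y = i then 1 else 0)" using assms by (simp add: sum.delta')
      finally show ?thesis by (auto simp: Um_def)
    qed
    finally show ?thesis by (auto simp: algebra_simps)
  qed
  have z: "t + sf i j t + (if i = j then t * sf i j t else 0) = 0"
  proof (cases "i = j")
    case True
    have "1 + t \<noteq> 0" using assms(1) by (metis add.commute add_eq_0_iff)
    then show ?thesis using True by (simp add: sf_def field_simps)
  qed (simp add: sf_def)
  have z2: "sf i j t + t + (if i = j then sf i j t * t else 0) = 0"
    using z by (cases "i = j") (simp_all add: algebra_simps)
  show ?thesis unfolding is_inverse_def gt_def ht_def
  proof (intro allI impI conjI)
    fix x y assume xy: "x < N" "y < N"
    show "(\<Sum>k<N. (dl x k + t * Um i j x k) * (dl k y + sf i j t * Um i j k y)) = (if x = y then 1 else 0)"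
      using key[OF xy, of t "sf i j t"] z by (simp add: dl_def)
    show "(\<Sum>k<N. (dl x k + sf i j t * Um i j x k) * (dl k y + t * Um i j k y)) = (if x = y then 1 else 0)"
      using key[OF xy, of "sf i j t" t] z2 by (simp add: dl_def)
  qed
qed

lemma dl_prod: "finite A \<Longrightarrow> (\<Prod>x\<in>A. dl (f x) (g x)) = (if (\<forall>x\<in>A. f x = g x) then 1 else 0)"
  unfolding dl_def by (rule prod_ind)

lemma dG:
  "((\<lambda>t. \<Prod>p<m. gt i j t (a!p) (c!p)) has_field_derivative
     (\<Sum>p<m. Um i j (a!p) (c!p) * (\<Prod>r\<in>{..<m}-{p}. dl (a!r) (c!r)))) (at 0)"
  using has_field_derivative_prod[of "{..<m}" "\<lambda>p t. gt i j t (a!p) (c!p)" "\<lambda>p. Um i j (a!p) (c!p)" 0]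
  by (simp add: gt_deriv gt0)

lemma dH:
  "((\<lambda>t. \<Prod>q<n. ht i j t (d!q) (b!q)) has_field_derivative
     (\<Sum>q<n. - Um i j (d!q) (b!q) * (\<Prod>r\<in>{..<n}-{q}. dl (d!r) (b!r)))) (at 0)"
  using has_field_derivative_prod[of "{..<n}" "\<lambda>q t. ht i j t (d!q) (b!q)" "\<lambda>q. - Um i j (d!q) (b!q)" 0]
  by (simp add: ht_deriv ht0)

lemma dPair:
  "((\<lambda>t. (\<Prod>p<m. gt i j t (a!p) (c!p)) * (\<Prod>q<n. ht i j t (d!q) (b!q)) * Y c d) has_field_derivative
     ((\<Prod>p<m. dl (a!p) (c!p)) * (\<Sum>q<n. - Um i j (d!q) (b!q) * (\<Prod>r\<in>{..<n}-{q}. dl (d!r) (b!r)))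
      + (\<Sum>p<m. Um i j (a!p) (c!p) * (\<Prod>r\<in>{..<m}-{p}. dl (a!r) (c!r))) * (\<Prod>q<n. dl (d!q) (b!q))) * Y c d) (at 0)"
proof -
  have "((\<lambda>t. (\<Prod>p<m. gt i j t (a!p) (c!p)) * (\<Prod>q<n. ht i j t (d!q) (b!q))) has_field_derivative
     (\<Prod>p<m. gt i j 0 (a!p) (c!p)) * (\<Sum>q<n. - Um i j (d!q) (b!q) * (\<Prod>r\<in>{..<n}-{q}. dl (d!r) (b!r)))
      + (\<Sum>p<m. Um i j (a!p) (c!p) * (\<Prod>r\<in>{..<m}-{p}. dl (a!r) (c!r))) * (\<Prod>q<n. ht i j 0 (d!q) (b!q))) (at 0)"
    by (rule DERIV_mult'[OF dG dH])
  then show ?thesis unfolding gt0 ht0 by (rule DERIV_cmult_right)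
qed

lemma list_upd_char:
  assumes "length c = length a" "p < length a"
  shows "c = a[p:=v] \<longleftrightarrow> c ! p = v \<and> (\<forall>r\<in>{..<length a}-{p}. a ! r = c ! r)"
  using assms by (auto simp: list_eq_iff_nth_eq nth_list_update)

lemma list_eq_char:
  assumes "length c = length a"
  shows "c = a \<longleftrightarrow> (\<forall>r\<in>{..<length a}. c ! r = a ! r)"
  using assms by (auto simp: list_eq_iff_nth_eq)

lemma PW1:
  assumes "(c, d) \<in> idx m n N" "length a = m" "length b = n" "p < m"
  shows "Um i j (a!p) (c!p) * (\<Prod>r\<in>{..<m}-{p}. dl (a!r) (c!r)) * (\<Prod>q<n. dl (d!q) (b!q))
       = (if (c, d) = (a[p:=i], b) \<and> a!p = j then 1 else 0)"
proof -
  have lc: "length c = m" and ld: "length d = n" using assms(1) by (auto simp: idx_def)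
  have e1: "c = a[p:=i] \<longleftrightarrow> c ! p = i \<and> (\<forall>r\<in>{..<m}-{p}. a ! r = c ! r)"
    using list_upd_char[of c a p i] lc assms by simp
  have e2: "d = b \<longleftrightarrow> (\<forall>r\<in>{..<n}. d ! r = b ! r)"
    using list_eq_char[of d b] ld assms by simp
  show ?thesis
    by (simp add: dl_prod e1 e2 Um_def)
qed

lemma PW2:
  assumes "(c, d) \<in> idx m n N" "length a = m" "length b = n" "q < n"
  shows "(\<Prod>p<m. dl (a!p) (c!p)) * (Um i j (d!q) (b!q) * (\<Prod>r\<in>{..<n}-{q}. dl (d!r) (b!r)))
       = (if (c, d) = (a, b[q:=j]) \<and> b!q = i then 1 else 0)"
proof -
  have lc: "length c = m" and ld: "length d = n" using assms(1) by (auto simp: idx_def)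
  have e1: "d = b[q:=j] \<longleftrightarrow> d ! q = j \<and> (\<forall>r\<in>{..<n}-{q}. b ! r = d ! r)"
    using list_upd_char[of d b q j] ld assms by simp
  have e2: "c = a \<longleftrightarrow> (\<forall>r\<in>{..<m}. a ! r = c ! r)"
    using list_eq_char[of c a] lc assms by auto
  show ?thesis
    by (simp add: dl_prod e1 e2 Um_def)
qed

lemma sum_idx_delta:
  assumes "x0 \<in> idx m n N"
  shows "(\<Sum>x\<in>idx m n N. if x = x0 then F x else 0) = F x0"
  using assms finite_idx by (simp add: sum.delta')

lemma gl_deriv:
  assumes ab: "(a, b) \<in> idx m n N" and ij: "i < N" "j < N"
  shows "((\<lambda>t. gl_act m n N (gt i j t) (ht i j t) Y a b) has_field_derivative - Eact m n i j Y a b) (at 0)"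
proof -
  have la: "length a = m" and lb: "length b = n" and va: "valid_idx N a" and vb: "valid_idx N b"
    using ab by (auto simp: idx_def)
  define D where "D = (\<lambda>x. case x of (c, d) \<Rightarrow>
     ((\<Prod>p<m. dl (a!p) (c!p)) * (\<Sum>q<n. - Um i j (d!q) (b!q) * (\<Prod>r\<in>{..<n}-{q}. dl (d!r) (b!r)))
      + (\<Sum>p<m. Um i j (a!p) (c!p) * (\<Prod>r\<in>{..<m}-{p}. dl (a!r) (c!r))) * (\<Prod>q<n. dl (d!q) (b!q))) * Y c d)"
  have "((\<lambda>t. \<Sum>x\<in>idx m n N. case x of (c, d) \<Rightarrow> (\<Prod>p<m. gt i j t (a!p) (c!p)) * (\<Prod>q<n. ht i j t (d!q) (b!q)) * Y c d)
        has_field_derivative (\<Sum>x\<in>idx m n N. D x)) (at 0)"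
  proof (rule DERIV_sum)
    fix x assume "x \<in> idx m n N"
    obtain c d where x: "x = (c, d)" by (cases x)
    show "((\<lambda>t. case x of (c, d) \<Rightarrow> (\<Prod>p<m. gt i j t (a!p) (c!p)) * (\<Prod>q<n. ht i j t (d!q) (b!q)) * Y c d)
        has_field_derivative D x) (at 0)"
      unfolding x D_def using dPair by simp
  qed
  moreover have "(\<Sum>x\<in>idx m n N. D x) = - Eact m n i j Y a b"
  proof -
    have "(\<Sum>x\<in>idx m n N. D x) = (\<Sum>x\<in>idx m n N. \<Sum>p<m. if x = (a[p:=i], b) then (if a!p = j then Y (a[p:=i]) b else 0) else 0)
        - (\<Sum>x\<in>idx m n N. \<Sum>q<n. if x = (a, b[q:=j]) then (if b!q = i then Y a (b[q:=j]) else 0) else 0)"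
      unfolding sum_subtractf[symmetric]
    proof (rule sum.cong[OF refl])
      fix x assume x: "x \<in> idx m n N"
      obtain c d where xcd: "x = (c, d)" by (cases x)
      have cd: "(c, d) \<in> idx m n N" using x xcd by simp
      have 1: "(\<Sum>p<m. Um i j (a!p) (c!p) * (\<Prod>r\<in>{..<m}-{p}. dl (a!r) (c!r))) * (\<Prod>q<n. dl (d!q) (b!q)) * Y c d
          = (\<Sum>p<m. if x = (a[p:=i], b) then (if a!p = j then Y (a[p:=i]) b else 0) else 0)"
        unfolding sum_distrib_right
      proof (rule sum.cong[OF refl])
        fix p assume "p \<in> {..<m}"
        then show "Um i j (a!p) (c!p) * (\<Prod>r\<in>{..<m}-{p}. dl (a!r) (c!r)) * (\<Prod>q<n. dl (d!q) (b!q)) * Y c d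
          = (if x = (a[p:=i], b) then (if a!p = j then Y (a[p:=i]) b else 0) else 0)"
          using PW1[OF cd la lb, of p i j] xcd by auto
      qed
      have 2: "(\<Prod>p<m. dl (a!p) (c!p)) * (\<Sum>q<n. - Um i j (d!q) (b!q) * (\<Prod>r\<in>{..<n}-{q}. dl (d!r) (b!r))) * Y c d
          = - (\<Sum>q<n. if x = (a, b[q:=j]) then (if b!q = i then Y a (b[q:=j]) else 0) else 0)"
        unfolding sum_distrib_left sum_distrib_right sum_negf[symmetric]
      proof (rule sum.cong[OF refl])
        fix q assume "q \<in> {..<n}"
        then show "(\<Prod>p<m. dl (a!p) (c!p)) * (- Um i j (d!q) (b!q) * (\<Prod>r\<in>{..<n}-{q}. dl (d!r) (b!r))) * Y c d
          = - (if x = (a, b[q:=j]) then (if b!q = i then Y a (b[q:=j]) else 0) else 0)"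
          using PW2[OF cd la lb, of q i j] xcd by auto
      qed
      show "D x = (\<Sum>p<m. if x = (a[p:=i], b) then (if a!p = j then Y (a[p:=i]) b else 0) else 0)
          - (\<Sum>q<n. if x = (a, b[q:=j]) then (if b!q = i then Y a (b[q:=j]) else 0) else 0)"
        unfolding D_def xcd using 1 2 xcd by (simp add: algebra_simps)
    qed
    also have "(\<Sum>x\<in>idx m n N. \<Sum>p<m. if x = (a[p:=i], b) then (if a!p = j then Y (a[p:=i]) b else 0) else 0)
        = (\<Sum>p<m. if a!p = j then Y (a[p:=i]) b else 0)"
      apply (subst sum.swap)
    proof (rule sum.cong[OF refl])
      fix p assume "p \<in> {..<m}"
      then have "(a[p:=i], b) \<in> idx m n N" using ab ij
        by (auto simp: idx_def valid_idx_def set_update_subset_insert dest!: set_update_subset_insert[THEN subsetD])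
      then show "(\<Sum>x\<in>idx m n N. if x = (a[p:=i], b) then (if a!p = j then Y (a[p:=i]) b else 0) else 0)
          = (if a!p = j then Y (a[p:=i]) b else 0)"
        by (rule sum_idx_delta)
    qed
    also have "(\<Sum>x\<in>idx m n N. \<Sum>q<n. if x = (a, b[q:=j]) then (if b!q = i then Y a (b[q:=j]) else 0) else 0)
        = (\<Sum>q<n. if b!q = i then Y a (b[q:=j]) else 0)"
      apply (subst sum.swap)
    proof (rule sum.cong[OF refl])
      fix q assume "q \<in> {..<n}"
      then have "(a, b[q:=j]) \<in> idx m n N" using ab ij
        by (auto simp: idx_def valid_idx_def dest!: set_update_subset_insert[THEN subsetD])
      then show "(\<Sum>x\<in>idx m n N. if x = (a, b[q:=j]) then (if b!q = i then Y a (b[q:=j]) else 0) else 0)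
          = (if b!q = i then Y a (b[q:=j]) else 0)"
        by (rule sum_idx_delta)
    qed
    finally show ?thesis by (simp add: Eact_def sum_negf[symmetric] if_distrib cong: if_cong)
  qed
  ultimately show ?thesis unfolding gl_act_def by simp
qed

lemma M_comm_E:
  assumes MC: "in_C m n N M" and ab: "(a, b) \<in> idx m n N" and ij: "i < N" "j < N"
  shows "lin_apply m n N M (Eact m n i j T) a b = Eact m n i j (lin_apply m n N M T) a b"
proof -
  define f where "f = (\<lambda>t. lin_apply m n N M (gl_act m n N (gt i j t) (ht i j t) T) a b
                      - gl_act m n N (gt i j t) (ht i j t) (lin_apply m n N M T) a b)"
  have d1: "((\<lambda>t. lin_apply m n N M (gl_act m n N (gt i j t) (ht i j t) T) a b) has_field_derivative
      (\<Sum>x\<in>idx m n N. case x of (c, d) \<Rightarrow> M (a, b) (c, d) * (- Eact m n i j T c d))) (at 0)"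
    unfolding lin_apply_def
  proof (rule DERIV_sum)
    fix x assume x: "x \<in> idx m n N"
    obtain c d where xcd: "x = (c, d)" by (cases x)
    have "((\<lambda>t. M (a, b) (c, d) * gl_act m n N (gt i j t) (ht i j t) T c d) has_field_derivative
         M (a, b) (c, d) * (- Eact m n i j T c d)) (at 0)"
      by (rule DERIV_cmult[OF gl_deriv]) (use x xcd ij in auto)
    then show "((\<lambda>t. case x of (c, d) \<Rightarrow> M (a, b) (c, d) * gl_act m n N (gt i j t) (ht i j t) T c d)
        has_field_derivative (case x of (c, d) \<Rightarrow> M (a, b) (c, d) * (- Eact m n i j T c d))) (at 0)"
      by (simp add: xcd)
  qed
  have d2: "((\<lambda>t. gl_act m n N (gt i j t) (ht i j t) (lin_apply m n N M T) a b) has_field_derivative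
      - Eact m n i j (lin_apply m n N M T) a b) (at 0)"
    by (rule gl_deriv[OF ab ij])
  have df: "(f has_field_derivative
      (\<Sum>x\<in>idx m n N. case x of (c, d) \<Rightarrow> M (a, b) (c, d) * (- Eact m n i j T c d))
       - (- Eact m n i j (lin_apply m n N M T) a b)) (at 0)"
    unfolding f_def by (rule DERIV_diff[OF d1 d2])
  have f0: "(f has_field_derivative 0) (at 0)"
  proof (rule has_field_derivative_transform_within[OF DERIV_const[of 0] _ _ ])
    show "(0::real) < 1/2" by simp
    show "(0::complex) \<in> UNIV" by simp
    fix t :: complex assume "t \<in> UNIV" "dist t 0 < 1/2"
    then have "norm t < 1/2" by simp
    then have "t \<noteq> -1" by auto
    then have "is_inverse N (gt i j t) (ht i j t)" using ij by (rule inverse_gt)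
    then have "teq m n N (lin_apply m n N M (gl_act m n N (gt i j t) (ht i j t) T))
                 (gl_act m n N (gt i j t) (ht i j t) (lin_apply m n N M T))"
      using MC unfolding in_C_def by blast
    then show "0 = f t" using ab unfolding teq_def f_def by auto
  qed
  have "(\<Sum>x\<in>idx m n N. case x of (c, d) \<Rightarrow> M (a, b) (c, d) * (- Eact m n i j T c d))
       - (- Eact m n i j (lin_apply m n N M T) a b) = 0"
    using DERIV_unique[OF df f0] .
  moreover have "(\<Sum>x\<in>idx m n N. case x of (c, d) \<Rightarrow> M (a, b) (c, d) * (- Eact m n i j T c d))
      = - lin_apply m n N M (Eact m n i j T) a b"
    unfolding lin_apply_def sum_negf[symmetric] by (rule sum.cong) auto
  ultimately show ?thesis by simp
qed



lemma lin_sum: "lin_apply m n N M (\<lambda>a b. \<Sum>i\<in>I. F i a b) a b = (\<Sum>i\<in>I. lin_apply m n N M (F i) a b)"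
  unfolding lin_apply_def sum_distrib_left split_def by (rule sum.swap)

lemma lin_add: "lin_apply m n N M (\<lambda>a b. X a b + Y a b) a b = lin_apply m n N M X a b + lin_apply m n N M Y a b"
  unfolding lin_apply_def split_def by (simp add: distrib_left sum.distrib)

lemma lin_diff: "lin_apply m n N M (\<lambda>a b. X a b - Y a b) a b = lin_apply m n N M X a b - lin_apply m n N M Y a b"
  unfolding lin_apply_def split_def by (simp add: right_diff_distrib sum_subtractf)

lemma lin_scal: "lin_apply m n N M (\<lambda>a b. u * X a b) a b = u * lin_apply m n N M X a b"
  unfolding lin_apply_def split_def by (simp add: sum_distrib_left algebra_simps)

lemma lin_local: "teq m n N X Y \<Longrightarrow> lin_apply m n N M X a b = lin_apply m n N M Y a b"
  unfolding lin_apply_def teq_def by (rule sum.cong) auto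

lemma upd_idx1: "(a, b) \<in> idx m n N \<Longrightarrow> i < N \<Longrightarrow> (a[p:=i], b) \<in> idx m n N"
  by (auto simp: idx_def valid_idx_def dest!: set_update_subset_insert[THEN subsetD])

lemma upd_idx2: "(a, b) \<in> idx m n N \<Longrightarrow> i < N \<Longrightarrow> (a, b[p:=i]) \<in> idx m n N"
  by (auto simp: idx_def valid_idx_def dest!: set_update_subset_insert[THEN subsetD])

lemma Eact_local:
  assumes "teq m n N X Y" "(a, b) \<in> idx m n N" "i < N" "j < N"
  shows "Eact m n i j X a b = Eact m n i j Y a b"
proof -
  have 1: "X (a[p:=i]) b = Y (a[p:=i]) b" for p
    using assms upd_idx1[OF assms(2,3), of p] unfolding teq_def by auto
  have 2: "X a (b[q:=j]) = Y a (b[q:=j])" for q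
    using assms upd_idx2[OF assms(2,4), of q] unfolding teq_def by auto
  show ?thesis unfolding Eact_def by (simp only: 1 2)
qed

lemma M_comm_cas:
  assumes MC: "in_C m n N M" and ab: "(a, b) \<in> idx m n N"
  shows "lin_apply m n N M (casimir m n N T) a b = casimir m n N (lin_apply m n N M T) a b"
proof -
  have E1: "teq m n N (lin_apply m n N M (Eact m n i j T)) (Eact m n i j (lin_apply m n N M T))"
    if "i < N" "j < N" for i j T
    unfolding teq_def using M_comm_E[OF MC _ that] by auto
  have E2: "lin_apply m n N M (Eact m n i j (Eact m n j i T)) a b = Eact m n i j (Eact m n j i (lin_apply m n N M T)) a b"
    if "i < N" "j < N" for i j
    using M_comm_E[OF MC ab that] Eact_local[OF E1[of j i T] ab that] that by simp
  have "lin_apply m n N M (casimir m n N T) a b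
     = 1/2 * ((\<Sum>i<N. \<Sum>j<N. lin_apply m n N M (Eact m n i j (Eact m n j i T)) a b)
              + of_nat N * (\<Sum>i<N. lin_apply m n N M (Eact m n i i T) a b))"
    unfolding casimir_def lin_scal lin_add lin_sum by simp
  also have "\<dots> = casimir m n N (lin_apply m n N M T) a b"
    unfolding casimir_def using E2 M_comm_E[OF MC ab] by simp
  finally show ?thesis .
qed

lemma M_comm_Cop:
  assumes MC: "in_C m n N M"
  shows "teq m n N (Cop m n N (lin_apply m n N M T)) (lin_apply m n N M (Cop m n N T))"
  unfolding teq_def
proof (intro ballI, clarify)
  fix a b assume ab: "(a, b) \<in> idx m n N"
  have t: "teq m n N (Cop m n N T) (casimir m n N T)"
    unfolding teq_def using casimir_Cop by auto
  have "lin_apply m n N M (Cop m n N T) a b = lin_apply m n N M (casimir m n N T) a b"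
    by (rule lin_local[OF t])
  also have "\<dots> = casimir m n N (lin_apply m n N M T) a b" by (rule M_comm_cas[OF MC ab])
  also have "\<dots> = Cop m n N (lin_apply m n N M T) a b" by (rule casimir_Cop[OF ab])
  finally show "Cop m n N (lin_apply m n N M T) a b = lin_apply m n N M (Cop m n N T) a b" by simp
qed



definition Gk :: "nat \<Rightarrow> (nat \<Rightarrow> nat \<Rightarrow> complex) \<Rightarrow> nat list \<Rightarrow> nat list \<Rightarrow> complex" where
  "Gk m g a c = (\<Prod>p<m. g (a!p) (c!p))"

lemma gl_lin: "gl_act m n N g h X a b =
   lin_apply m n N (\<lambda>(a, b) (c, d). Gk m g a c * Gk n (\<lambda>x y. h y x) b d) X a b"
  unfolding gl_act_def lin_apply_def Gk_def by (simp add: split_def)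

definition tr :: "nat \<Rightarrow> nat \<Rightarrow> nat \<Rightarrow> nat" where
  "tr p q r = (if r = p then q else if r = q then p else r)"

lemma nth_swap: "r < length c \<Longrightarrow> p < length c \<Longrightarrow> q < length c \<Longrightarrow> swap_list p q c ! r = c ! (tr p q r)"
  by (auto simp: swap_list_def tr_def nth_list_update)

lemma length_swap[simp]: "length (swap_list p q c) = length c"
  by (simp add: swap_list_def)

lemma swap_swap: "p < length c \<Longrightarrow> q < length c \<Longrightarrow> swap_list p q (swap_list p q c) = c"
  by (auto simp: list_eq_iff_nth_eq nth_swap tr_def)

lemma tr_bij: "p < m \<Longrightarrow> q < m \<Longrightarrow> bij_betw (tr p q) {..<m} {..<m}"
  by (rule bij_betw_byWitness[where f'="tr p q"]) (auto simp: tr_def)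

lemma valid_swap: "valid_idx N c \<Longrightarrow> p < length c \<Longrightarrow> q < length c \<Longrightarrow> valid_idx N (swap_list p q c)"
  unfolding valid_idx_def by (metis in_set_conv_nth length_swap nth_swap tr_def)

lemma Gk_swap:
  assumes "length a = m" "length c = m" "p < m" "q < m"
  shows "Gk m g a (swap_list p q c) = Gk m g (swap_list p q a) c"
proof -
  have "Gk m g a (swap_list p q c) = (\<Prod>r<m. g (a!r) (c!(tr p q r)))"
    unfolding Gk_def using assms by (intro prod.cong refl) (simp add: nth_swap)
  also have "\<dots> = (\<Prod>r<m. g (a!(tr p q (tr p q r))) (c!(tr p q r)))"
    by (intro prod.cong refl) (simp add: tr_def)
  also have "\<dots> = (\<Prod>r<m. g (a!(tr p q r)) (c!r))"
    using prod.reindex_bij_betw[OF tr_bij[OF assms(3,4)], of "\<lambda>r. g (a!(tr p q r)) (c!r)"] by simp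
  also have "\<dots> = Gk m g (swap_list p q a) c"
    unfolding Gk_def using assms by (intro prod.cong refl) (simp add: nth_swap)
  finally show ?thesis .
qed

lemma bij_swapL:
  assumes "p < m" "q < m"
  shows "bij_betw (\<lambda>(c, d). (swap_list p q c, d)) (idx m n N) (idx m n N)"
  by (rule bij_betw_byWitness[where f'="\<lambda>(c, d). (swap_list p q c, d)"])
     (use assms in \<open>auto simp: idx_def swap_swap valid_swap\<close>)

lemma bij_swapR:
  assumes "p < n" "q < n"
  shows "bij_betw (\<lambda>(c, d). (c, swap_list p q d)) (idx m n N) (idx m n N)"
  by (rule bij_betw_byWitness[where f'="\<lambda>(c, d). (c, swap_list p q d)"])
     (use assms in \<open>auto simp: idx_def swap_swap valid_swap\<close>)

lemma gl_tauL:
  assumes "length a = m" "p < m" "q < m"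
  shows "gl_act m n N g h T (swap_list p q a) b = gl_act m n N g h (tauL p q T) a b"
proof -
  let ?F = "\<lambda>(c, d). Gk m g a c * Gk n (\<lambda>x y. h y x) b d * T (swap_list p q c) d"
  have "gl_act m n N g h (tauL p q T) a b = (\<Sum>x\<in>idx m n N. ?F x)"
    unfolding gl_lin lin_apply_def tauL_def by (intro sum.cong refl) auto
  also have "\<dots> = (\<Sum>x\<in>idx m n N. ?F ((\<lambda>(c, d). (swap_list p q c, d)) x))"
    using sum.reindex_bij_betw[OF bij_swapL[OF assms(2,3)], of ?F] by simp
  also have "\<dots> = (\<Sum>x\<in>idx m n N. case x of (c, d) \<Rightarrow> Gk m g (swap_list p q a) c * Gk n (\<lambda>x y. h y x) b d * T c d)"
  proof (intro sum.cong refl)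
    fix x assume x: "x \<in> idx m n N"
    obtain c d where xcd: "x = (c, d)" by (cases x)
    have lc: "length c = m" using x xcd by (auto simp: idx_def)
    show "?F ((\<lambda>(c, d). (swap_list p q c, d)) x) = (case x of (c, d) \<Rightarrow> Gk m g (swap_list p q a) c * Gk n (\<lambda>x y. h y x) b d * T c d)"
      using xcd lc assms by (simp add: swap_swap Gk_swap)
  qed
  also have "\<dots> = gl_act m n N g h T (swap_list p q a) b"
    unfolding gl_lin lin_apply_def by (intro sum.cong refl) auto
  finally show ?thesis by simp
qed

lemma gl_tauR:
  assumes "length b = n" "p < n" "q < n"
  shows "gl_act m n N g h T a (swap_list p q b) = gl_act m n N g h (tauR p q T) a b"
proof -
  let ?F = "\<lambda>(c, d). Gk m g a c * Gk n (\<lambda>x y. h y x) b d * T c (swap_list p q d)"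
  have "gl_act m n N g h (tauR p q T) a b = (\<Sum>x\<in>idx m n N. ?F x)"
    unfolding gl_lin lin_apply_def tauR_def by (intro sum.cong refl) auto
  also have "\<dots> = (\<Sum>x\<in>idx m n N. ?F ((\<lambda>(c, d). (c, swap_list p q d)) x))"
    using sum.reindex_bij_betw[OF bij_swapR[OF assms(2,3)], of ?F] by simp
  also have "\<dots> = (\<Sum>x\<in>idx m n N. case x of (c, d) \<Rightarrow> Gk m g a c * Gk n (\<lambda>x y. h y x) (swap_list p q b) d * T c d)"
  proof (intro sum.cong refl)
    fix x assume x: "x \<in> idx m n N"
    obtain c d where xcd: "x = (c, d)" by (cases x)
    have ld: "length d = n" using x xcd by (auto simp: idx_def)
    show "?F ((\<lambda>(c, d). (c, swap_list p q d)) x) = (case x of (c, d) \<Rightarrow> Gk m g a c * Gk n (\<lambda>x y. h y x) (swap_list p q b) d * T c d)"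
      using xcd ld assms by (simp add: swap_swap Gk_swap)
  qed
  also have "\<dots> = gl_act m n N g h T a (swap_list p q b)"
    unfolding gl_lin lin_apply_def by (intro sum.cong refl) auto
  finally show ?thesis by simp
qed

definition S0 :: "nat \<Rightarrow> nat \<Rightarrow> nat \<Rightarrow> nat \<Rightarrow> nat \<Rightarrow> (nat list \<times> nat list) set" where
  "S0 m n N p q = {(c, d). (c, d) \<in> idx m n N \<and> c ! p = 0 \<and> d ! q = 0}"

lemma valid_upd: "valid_idx N c \<Longrightarrow> r < N \<Longrightarrow> valid_idx N (c[p:=r])"
  unfolding valid_idx_def by (auto dest!: set_update_subset_insert[THEN subsetD])

lemma valid_nth': "valid_idx N c \<Longrightarrow> p < length c \<Longrightarrow> c ! p < N"
  unfolding valid_idx_def by auto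

lemma upd_same: "c ! p = v \<Longrightarrow> c[p:=v] = c"
  by (metis list_update_id)

lemma DEC_bij:
  assumes "p < m" "q < n" "0 < N"
  shows "bij_betw (\<lambda>((c, d), (r, s)). (c[p:=r], d[q:=s])) (S0 m n N p q \<times> ({..<N} \<times> {..<N})) (idx m n N)"
proof (rule bij_betw_byWitness[where f'="\<lambda>(c, d). ((c[p:=0], d[q:=0]), (c!p, d!q))"])
  show "\<forall>x\<in>S0 m n N p q \<times> ({..<N} \<times> {..<N}). (\<lambda>(c, d). ((c[p:=0], d[q:=0]), (c!p, d!q))) ((\<lambda>((c, d), (r, s)). (c[p:=r], d[q:=s])) x) = x"
    using assms by (auto simp: S0_def idx_def upd_same)
  show "\<forall>y\<in>idx m n N. (\<lambda>((c, d), (r, s)). (c[p:=r], d[q:=s])) ((\<lambda>(c, d). ((c[p:=0], d[q:=0]), (c!p, d!q))) y) = y"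
    using assms by (auto simp: idx_def)
  show "(\<lambda>((c, d), (r, s)). (c[p:=r], d[q:=s])) ` (S0 m n N p q \<times> ({..<N} \<times> {..<N})) \<subseteq> idx m n N"
    using assms by (auto simp: S0_def idx_def valid_upd)
  show "(\<lambda>(c, d). ((c[p:=0], d[q:=0]), (c!p, d!q))) ` idx m n N \<subseteq> S0 m n N p q \<times> ({..<N} \<times> {..<N})"
    using assms by (auto simp: S0_def idx_def valid_upd valid_nth')
qed

lemma DEC:
  assumes "p < m" "q < n" "0 < N"
  shows "(\<Sum>(c, d)\<in>idx m n N. F c d) = (\<Sum>(c, d)\<in>S0 m n N p q. \<Sum>r<N. \<Sum>s<N. F (c[p:=r]) (d[q:=s]))"
proof -
  have "(\<Sum>(c, d)\<in>idx m n N. F c d)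
      = (\<Sum>x\<in>S0 m n N p q \<times> ({..<N} \<times> {..<N}). (\<lambda>(c, d). F c d) ((\<lambda>((c, d), (r, s)). (c[p:=r], d[q:=s])) x))"
    using sum.reindex_bij_betw[OF DEC_bij[OF assms], of "\<lambda>(c, d). F c d"] by simp
  also have "\<dots> = (\<Sum>x\<in>S0 m n N p q. \<Sum>y\<in>{..<N} \<times> {..<N}. (\<lambda>(c, d). F c d) ((\<lambda>((c, d), (r, s)). (c[p:=r], d[q:=s])) (x, y)))"
    by (subst sum.cartesian_product) (simp add: split_def)
  also have "\<dots> = (\<Sum>(c, d)\<in>S0 m n N p q. \<Sum>r<N. \<Sum>s<N. F (c[p:=r]) (d[q:=s]))"
    by (intro sum.cong refl, clarsimp, subst sum.cartesian_product, simp add: split_def)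
  finally show ?thesis .
qed

definition Gr :: "nat \<Rightarrow> nat \<Rightarrow> (nat \<Rightarrow> nat \<Rightarrow> complex) \<Rightarrow> nat list \<Rightarrow> nat list \<Rightarrow> complex" where
  "Gr m p g a c = (\<Prod>r\<in>{..<m}-{p}. g (a!r) (c!r))"

lemma Gk_split: "p < m \<Longrightarrow> Gk m g a c = g (a!p) (c!p) * Gr m p g a c"
  unfolding Gk_def Gr_def by (rule prod.remove) auto

lemma Gr_upd1: "Gr m p g a (c[p:=k]) = Gr m p g a c"
  unfolding Gr_def by (intro prod.cong refl) auto

lemma Gr_upd2: "Gr m p g (a[p:=k]) c = Gr m p g a c"
  unfolding Gr_def by (intro prod.cong refl) auto

lemma S0_len: "(c, d) \<in> S0 m n N p q \<Longrightarrow> length c = m \<and> length d = n"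
  by (auto simp: S0_def idx_def)

lemma inv_hg: "is_inverse N g h \<Longrightarrow> s < N \<Longrightarrow> r < N \<Longrightarrow> (\<Sum>k<N. h s k * g k r) = dl s r"
  unfolding is_inverse_def dl_def by auto

lemma inv_gh: "is_inverse N g h \<Longrightarrow> s < N \<Longrightarrow> r < N \<Longrightarrow> (\<Sum>k<N. g s k * h k r) = dl s r"
  unfolding is_inverse_def dl_def by auto

lemma gl_tauA:
  assumes ab: "(a, b) \<in> idx m n N" and pq: "p < m" "q < n" and inv: "is_inverse N g h" and N: "0 < N"
  shows "tauA N p q (gl_act m n N g h T) a b = gl_act m n N g h (tauA N p q T) a b"
proof -
  define h' where "h' = (\<lambda>x y. h y x)"
  define W where "W = (\<lambda>c d. Gr m p g a c * Gr n q h' b d)"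
  define V where "V = (\<Sum>(c, d)\<in>S0 m n N p q. W c d * (\<Sum>k<N. T (c[p:=k]) (d[q:=k])))"
  have la: "length a = m" and lb: "length b = n" and va: "valid_idx N a" and vb: "valid_idx N b"
    using ab by (auto simp: idx_def)
  have glk: "gl_act m n N g h T (a[p:=k]) (b[q:=k])
      = (\<Sum>(c, d)\<in>S0 m n N p q. \<Sum>r<N. \<Sum>s<N. g k r * h s k * W c d * T (c[p:=r]) (d[q:=s]))" for k
  proof -
    have "gl_act m n N g h T (a[p:=k]) (b[q:=k])
        = (\<Sum>(c, d)\<in>idx m n N. g k (c!p) * h (d!q) k * W c d * T c d)"
      unfolding gl_lin lin_apply_def
      using pq la lb by (intro sum.cong refl) (auto simp: Gk_split[OF pq(1)] Gk_split[OF pq(2)] Gr_upd2 W_def h'_def)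
    also have "\<dots> = (\<Sum>(c, d)\<in>S0 m n N p q. \<Sum>r<N. \<Sum>s<N. g k ((c[p:=r])!p) * h ((d[q:=s])!q) k * W (c[p:=r]) (d[q:=s]) * T (c[p:=r]) (d[q:=s]))"
      by (rule DEC[OF pq N])
    also have "\<dots> = (\<Sum>(c, d)\<in>S0 m n N p q. \<Sum>r<N. \<Sum>s<N. g k r * h s k * W c d * T (c[p:=r]) (d[q:=s]))"
      using pq by (intro sum.cong refl) (auto simp: W_def Gr_upd1 dest!: S0_len)
    finally show ?thesis .
  qed
  have pt: "(\<Sum>k<N. g k r * h s k * W c d * T (c[p:=r]) (d[q:=s])) = dl s r * (W c d * T (c[p:=r]) (d[q:=s]))"
    if "r < N" "s < N" for c d r s
  proof -
    have e1: "(\<Sum>k<N. g k r * h s k) = dl s r" using inv_hg[OF inv] that by (auto simp: mult.commute)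
    have "(\<Sum>k<N. g k r * h s k * W c d * T (c[p:=r]) (d[q:=s])) = (\<Sum>k<N. g k r * h s k) * (W c d * T (c[p:=r]) (d[q:=s]))"
      by (simp add: sum_distrib_right mult.assoc)
    then show ?thesis unfolding e1 .
  qed
  have L: "(\<Sum>k<N. gl_act m n N g h T (a[p:=k]) (b[q:=k])) = V"
  proof -
    have "(\<Sum>k<N. gl_act m n N g h T (a[p:=k]) (b[q:=k]))
        = (\<Sum>(c, d)\<in>S0 m n N p q. \<Sum>r<N. \<Sum>s<N. \<Sum>k<N. g k r * h s k * W c d * T (c[p:=r]) (d[q:=s]))"
      unfolding glk split_def
      by (subst sum.swap, rule sum.cong[OF refl], subst sum.swap, rule sum.cong[OF refl], subst sum.swap, rule refl)
    also have "\<dots> = (\<Sum>(c, d)\<in>S0 m n N p q. \<Sum>r<N. \<Sum>s<N. dl s r * (W c d * T (c[p:=r]) (d[q:=s])))"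
      using pt by (intro sum.cong refl) auto
    also have "\<dots> = (\<Sum>(c, d)\<in>S0 m n N p q. \<Sum>r<N. W c d * T (c[p:=r]) (d[q:=r]))"
    proof (intro sum.cong refl, clarify, intro sum.cong refl)
      fix c d r assume "(c, d) \<in> S0 m n N p q" "r \<in> {..<N}"
      then show "(\<Sum>s<N. dl s r * (W c d * T (c[p:=r]) (d[q:=s]))) = W c d * T (c[p:=r]) (d[q:=r])"
        using dl_sumR[of r N "\<lambda>s. W c d * T (c[p:=r]) (d[q:=s])"] by (simp add: dl_def mult.commute)
    qed
    also have "\<dots> = V" unfolding V_def by (simp add: sum_distrib_left)
    finally show ?thesis .
  qed
  have R: "gl_act m n N g h (tauA N p q T) a b = (if a!p = b!q then V else 0)"
  proof -
    have "gl_act m n N g h (tauA N p q T) a b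
        = (\<Sum>(c, d)\<in>idx m n N. g (a!p) (c!p) * h (d!q) (b!q) * W c d * tauA N p q T c d)"
      unfolding gl_lin lin_apply_def
      by (intro sum.cong refl) (auto simp: Gk_split[OF pq(1)] Gk_split[OF pq(2)] W_def h'_def)
    also have "\<dots> = (\<Sum>(c, d)\<in>S0 m n N p q. \<Sum>r<N. \<Sum>s<N. g (a!p) ((c[p:=r])!p) * h ((d[q:=s])!q) (b!q) * W (c[p:=r]) (d[q:=s]) * tauA N p q T (c[p:=r]) (d[q:=s]))"
      by (rule DEC[OF pq N])
    also have "\<dots> = (\<Sum>(c, d)\<in>S0 m n N p q. \<Sum>r<N. \<Sum>s<N. dl r s * (g (a!p) r * h r (b!q) * (W c d * (\<Sum>k<N. T (c[p:=k]) (d[q:=k])))))"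
      using pq by (intro sum.cong refl, clarify, intro sum.cong refl) (auto simp: W_def Gr_upd1 tauA_def dl_def dest!: S0_len)
    also have "\<dots> = (\<Sum>(c, d)\<in>S0 m n N p q. \<Sum>r<N. g (a!p) r * h r (b!q) * (W c d * (\<Sum>k<N. T (c[p:=k]) (d[q:=k]))))"
    proof (intro sum.cong refl, clarify, intro sum.cong refl)
      fix c d r assume "(c, d) \<in> S0 m n N p q" "r \<in> {..<N}"
      then show "(\<Sum>s<N. dl r s * (g (a!p) r * h r (b!q) * (W c d * (\<Sum>k<N. T (c[p:=k]) (d[q:=k]))))) = g (a!p) r * h r (b!q) * (W c d * (\<Sum>k<N. T (c[p:=k]) (d[q:=k])))"
        using dl_sumL[of r N] by simp
    qed
    also have "\<dots> = (\<Sum>(c, d)\<in>S0 m n N p q. dl (a!p) (b!q) * (W c d * (\<Sum>k<N. T (c[p:=k]) (d[q:=k]))))"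
    proof (intro sum.cong refl, clarify)
      fix c d assume "(c, d) \<in> S0 m n N p q"
      have "(\<Sum>r<N. g (a!p) r * h r (b!q)) = dl (a!p) (b!q)"
        using inv_gh[OF inv] va vb la lb pq by (simp add: valid_nth')
      then show "(\<Sum>r<N. g (a!p) r * h r (b!q) * (W c d * (\<Sum>k<N. T (c[p:=k]) (d[q:=k])))) = dl (a!p) (b!q) * (W c d * (\<Sum>k<N. T (c[p:=k]) (d[q:=k])))"
        by (simp add: sum_distrib_right[symmetric])
    qed
    also have "\<dots> = (if a!p = b!q then V else 0)"
      unfolding V_def by (simp add: dl_def sum_distrib_left[symmetric])
    finally show ?thesis .
  qed
  have "tauA N p q (gl_act m n N g h T) a b = (if a!p = b!q then V else 0)"
    by (simp only: tauA_def L)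
  then show ?thesis using R by simp
qed

lemma Lop_fun: "Lop m T = (\<lambda>a b. \<Sum>p<m. \<Sum>q\<in>{p<..<m}. tauL p q T a b)"
  by (intro ext) (simp add: Lop_eq tauL_def)

lemma Rop_fun: "Rop n T = (\<lambda>a b. \<Sum>p<n. \<Sum>q\<in>{p<..<n}. tauR p q T a b)"
  by (intro ext) (simp add: Rop_eq tauR_def)

lemma gl_Cop:
  assumes inv: "is_inverse N g h" and N: "N \<ge> 1"
  shows "teq m n N (Cop m n N (gl_act m n N g h T)) (gl_act m n N g h (Cop m n N T))"
  unfolding teq_def
proof (intro ballI, clarify)
  fix a b assume ab: "(a, b) \<in> idx m n N"
  have la: "length a = m" and lb: "length b = n" using ab by (auto simp: idx_def)
  define Mg where "Mg = (\<lambda>(a::nat list, b::nat list) (c::nat list, d::nat list). Gk m g a c * Gk n (\<lambda>x y. h y x) b d)"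
  have gl: "gl_act m n N g h X a b = lin_apply m n N Mg X a b" for X
    unfolding Mg_def by (rule gl_lin)
  have hL: "gl_act m n N g h (Lop m T) a b = Lop m (gl_act m n N g h T) a b"
  proof -
    have "gl_act m n N g h (Lop m T) a b = (\<Sum>p<m. \<Sum>q\<in>{p<..<m}. gl_act m n N g h (tauL p q T) a b)"
      unfolding gl Lop_fun lin_sum ..
    also have "\<dots> = (\<Sum>p<m. \<Sum>q\<in>{p<..<m}. gl_act m n N g h T (swap_list p q a) b)"
      using la by (intro sum.cong refl) (simp add: gl_tauL)
    also have "\<dots> = Lop m (gl_act m n N g h T) a b" by (simp add: Lop_eq)
    finally show ?thesis .
  qed
  have hR: "gl_act m n N g h (Rop n T) a b = Rop n (gl_act m n N g h T) a b"
  proof -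
    have "gl_act m n N g h (Rop n T) a b = (\<Sum>p<n. \<Sum>q\<in>{p<..<n}. gl_act m n N g h (tauR p q T) a b)"
      unfolding gl Rop_fun lin_sum ..
    also have "\<dots> = (\<Sum>p<n. \<Sum>q\<in>{p<..<n}. gl_act m n N g h T a (swap_list p q b))"
      using lb by (intro sum.cong refl) (simp add: gl_tauR)
    also have "\<dots> = Rop n (gl_act m n N g h T) a b" by (simp add: Rop_eq)
    finally show ?thesis .
  qed
  have hA: "gl_act m n N g h (Aop m n N T) a b = Aop m n N (gl_act m n N g h T) a b"
  proof -
    have "gl_act m n N g h (Aop m n N T) a b = (\<Sum>p<m. \<Sum>q<n. gl_act m n N g h (tauA N p q T) a b)"
      unfolding gl Aop_def lin_sum ..
    also have "\<dots> = (\<Sum>p<m. \<Sum>q<n. tauA N p q (gl_act m n N g h T) a b)"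
      using ab inv N by (intro sum.cong refl) (simp add: gl_tauA)
    also have "\<dots> = Aop m n N (gl_act m n N g h T) a b" by (simp add: Aop_def)
    finally show ?thesis .
  qed
  have "gl_act m n N g h (Cop m n N T) a b
      = gl_act m n N g h (Lop m T) a b + gl_act m n N g h (Rop n T) a b - gl_act m n N g h (Aop m n N T) a b
        + of_nat (N * n) * gl_act m n N g h T a b"
    unfolding gl Cop_def lin_add lin_diff lin_scal ..
  then show "Cop m n N (gl_act m n N g h T) a b = gl_act m n N g h (Cop m n N T) a b"
    unfolding hL hR hA by (simp add: Cop_def)
qed


theorem lemma2p5:
  fixes m n N :: nat and T :: tensor
  assumes "N \<ge> 1"
  shows "(m \<ge> 1 \<and> n \<ge> 1 \<longrightarrow> teq m n N (casimir m n N T) (Cop m n N T))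
       \<and> (n = 0 \<longrightarrow> teq m n N (casimir m n N T) (Lop m T))
       \<and> (m = 0 \<longrightarrow> teq m n N (casimir m n N T) (\<lambda>a b. Rop n T a b + of_nat (N * n) * T a b))
       \<and> (m \<ge> 1 \<and> n \<ge> 1 \<longrightarrow> in_centre_C m n N (Cop m n N))"
proof (intro conjI impI)
  show "teq m n N (casimir m n N T) (Cop m n N T)"
    unfolding teq_def using casimir_Cop by auto
next
  assume n0: "n = 0"
  show "teq m n N (casimir m n N T) (Lop m T)"
    unfolding teq_def using casimir_Cop n0 by (auto simp: Cop_def Rop_def Aop_def)
next
  assume m0: "m = 0"
  show "teq m n N (casimir m n N T) (\<lambda>a b. Rop n T a b + of_nat (N * n) * T a b)"
    unfolding teq_def using casimir_Cop m0 by (auto simp: Cop_def Lop_def Aop_def)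
next
  show "in_centre_C m n N (Cop m n N)"
    unfolding in_centre_C_def using gl_Cop[OF _ assms] M_comm_Cop by blast
qed

end
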